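(* Let $n\ge2$ and $T=\alpha_0I+\alpha_1D+\cdots+\alpha_nD^n\in\mathcal L(\mathcal P_n)$ with $\alpha_0,\dots,\alpha_n\in\mathbb C$, $\alpha_0\ne0$. Then for every $\varepsilon>0$ there exists $C_T(\varepsilon)>0$ such that for every $f\in\mathcal P_n$ of degree at least $2$ with simple roots, $$\tau(f)>C_T(\varepsilon)\ \Longrightarrow\ d_F\Bigl(Z\bigl(S(\alpha_1/\alpha_0)f\bigr),Z(Tf)\Bigr)<\varepsilon.$$
   Context: $\mathcal P_n$ is the complex vector space of polynomials of degree at most $n$, $D$ differentiation, $I$ identity. For $\beta\in\mathbb C$, $S(\beta)$ is the shift $(S(\beta)f)(z)=f(\beta+z)$, so $Z(S(\beta)f)=\{-\beta\}+Z(f)$. $Z(f)$ denotes the roots of $f$ counted with multiplicity; $\deg Tf=\deg f$ for such $T$. For $f$ of degree $\ge2$ with at least two distinct roots, $\tau(f):=\min\{|w-v|:w\in Z(f),\ v\in Z(f')\setminus\{w\}\}$. For multisets $A=\{u_1,\dots,u_m\}$, $B=\{v_1,\dots,v_m\}$ in $\mathbb C$, $d_F(A,B)=\min_{\sigma}\max_k|u_k-v_{\sigma(k)}|$ over permutations $\sigma$ of $\{1,\dots,m\}$. *)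

theory Defs
  imports "HOL-Computational_Algebra.Polynomial" "HOL-Library.Multiset" "HOL-Combinatorics.Permutations"
begin

definition roots_mset :: "complex poly \<Rightarrow> complex multiset" where
  "roots_mset f = Abs_multiset (\<lambda>x. if f = 0 then 0 else order x f)"

definition diff_op :: "nat \<Rightarrow> (nat \<Rightarrow> complex) \<Rightarrow> complex poly \<Rightarrow> complex poly" where
  "diff_op n \<alpha> f = (\<Sum>k\<le>n. smult (\<alpha> k) ((pderiv ^^ k) f))"

definition shift_poly :: "complex \<Rightarrow> complex poly \<Rightarrow> complex poly" where
  "shift_poly \<beta> f = pcompose f [:\<beta>, 1:]"

definition tau :: "complex poly \<Rightarrow> real" where
  "tau f = Min {cmod (w - v) | w v. poly f w = 0 \<and> poly (pderiv f) v = 0 \<and> v \<noteq> w}"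

definition dF :: "complex multiset \<Rightarrow> complex multiset \<Rightarrow> real" where
  "dF A B = (let u = (SOME xs. mset xs = A); v = (SOME ys. mset ys = B); m = size A in
     Min ((\<lambda>\<sigma>. Max ((\<lambda>k. cmod (u ! k - v ! (\<sigma> k))) ` {..<m})) ` {\<sigma>. \<sigma> permutes {..<m}}))"

end

theory Submission
  imports Defs "HOL-Computational_Algebra.Fundamental_Theorem_Algebra"
begin

lemma roots_mset_proots: "roots_mset p = proots p"
proof -
  have "(\<lambda>x. if p = 0 then 0 else order x p) = count (proots p)"
    by (auto simp: fun_eq_iff)
  then show ?thesis unfolding roots_mset_def by (simp add: count_inverse)
qed

lemma higher_pderiv_pcompose_lin:
  "(pderiv ^^ k) (pcompose p [:x, 1:]) = pcompose ((pderiv ^^ k) p) [:x, 1:]"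
  by (induction k) (simp_all add: pderiv_pcompose pderiv_pCons)

lemma coeff_eq_higher_pderiv0:
  fixes r :: "complex poly"
  shows "coeff r k = poly ((pderiv ^^ k) r) 0 / fact k"
proof -
  have "poly ((pderiv ^^ k) r) 0 = coeff ((pderiv ^^ k) r) 0"
    by (simp add: poly_0_coeff_0)
  also have "\<dots> = pochhammer 1 k * coeff r k"
    by (simp add: coeff_higher_pderiv)
  finally show ?thesis by (simp add: pochhammer_fact[symmetric])
qed

lemma poly_taylor:
  fixes p :: "complex poly"
  assumes "degree p \<le> N"
  shows "poly p (x + s) = (\<Sum>k\<le>N. poly ((pderiv ^^ k) p) x / fact k * s ^ k)"
proof -
  let ?r = "pcompose p [:x, 1:]"
  have deg: "degree ?r = degree p" by (simp add: degree_pcompose)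
  have "poly p (x + s) = poly ?r s" by (simp add: poly_pcompose)
  also have "\<dots> = (\<Sum>k\<le>N. coeff ?r k * s ^ k)"
    unfolding poly_altdef using assms deg
    by (intro sum.mono_neutral_left) (auto simp: coeff_eq_0)
  also have "\<dots> = (\<Sum>k\<le>N. poly ((pderiv ^^ k) p) x / fact k * s ^ k)"
    by (intro sum.cong refl) (simp add: coeff_eq_higher_pderiv0 higher_pderiv_pcompose_lin poly_pcompose)
  finally show ?thesis .
qed

lemma higher_pderiv_lin_mult:
  "(pderiv ^^ k) ([:-r, 1:] * q) = [:-r, 1:] * (pderiv ^^ k) q + smult (of_nat k) ((pderiv ^^ (k - 1)) q)"
proof (induction k)
  case 0
  then show ?case by simp
next
  case (Suc k)
  have "(pderiv ^^ Suc k) ([:-r, 1:] * q) = pderiv ([:-r, 1:] * (pderiv ^^ k) q + smult (of_nat k) ((pderiv ^^ (k - 1)) q))"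
    using Suc by simp
  also have "\<dots> = [:-r, 1:] * (pderiv ^^ Suc k) q + (pderiv ^^ k) q + smult (of_nat k) (pderiv ((pderiv ^^ (k - 1)) q))"
    by (simp add: pderiv_mult pderiv_add pderiv_smult pderiv_pCons algebra_simps)
  also have "smult (of_nat k) (pderiv ((pderiv ^^ (k - 1)) q)) = smult (of_nat k) ((pderiv ^^ k) q)"
    by (cases k) auto
  finally show ?case by (simp add: algebra_simps smult_add_left)
qed

lemma mpoly: "poly [:-r, 1:] (x::complex) = x - r" by (simp add: algebra_simps)

lemma pow_succ_ineq:
  fixes s :: real
  assumes "s \<ge> 0"
  shows "s ^ Suc j + of_nat (Suc j) * s ^ j \<le> (s + 1) ^ Suc j"
proof (induction j)
  case 0
  then show ?case by simp
next
  case (Suc j)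
  have "(s + 1) * (s ^ Suc j + of_nat (Suc j) * s ^ j) \<le> (s + 1) * (s + 1) ^ Suc j"
    using Suc assms by (intro mult_left_mono) auto
  moreover have "s ^ Suc (Suc j) + of_nat (Suc (Suc j)) * s ^ Suc j \<le> (s + 1) * (s ^ Suc j + of_nat (Suc j) * s ^ j)"
    using assms by (simp add: algebra_simps)
  ultimately show ?case by simp
qed

definition linprod :: "complex multiset \<Rightarrow> complex poly" where
  "linprod R = (\<Prod>r\<in>#R. [:-r, 1:])"

lemma linprod_add: "linprod (add_mset r R) = [:-r, 1:] * linprod R"
  by (simp add: linprod_def)

lemma linprod_deriv_bound:
  fixes D :: real
  assumes "D > 0" "\<forall>r\<in>#R. D \<le> cmod (x - r)"
  shows "cmod (poly ((pderiv ^^ k) (linprod R)) x) * D ^ k \<le> real (size R) ^ k * cmod (poly (linprod R) x)"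
  using assms(2)
proof (induction R arbitrary: k)
  case empty
  then show ?case by (cases k) (auto simp: linprod_def funpow_Suc_right simp del: funpow.simps)
next
  case (add r R)
  have IH: "\<And>k. cmod (poly ((pderiv ^^ k) (linprod R)) x) * D ^ k \<le> real (size R) ^ k * cmod (poly (linprod R) x)"
    using add by auto
  have t: "D \<le> cmod (x - r)" using add by auto
  show ?case
  proof (cases k)
    case 0
    then show ?thesis by simp
  next
    case (Suc j)
    define s where "s = real (size R)"
    define P where "P = (\<lambda>k. cmod (poly ((pderiv ^^ k) (linprod R)) x))"
    define t where "t = cmod (x - r)"
    have P0: "P 0 = cmod (poly (linprod R) x)" by (simp add: P_def)
    have eq: "poly ((pderiv ^^ Suc j) (linprod (add_mset r R))) x
        = (x - r) * poly ((pderiv ^^ Suc j) (linprod R)) x + of_nat (Suc j) * poly ((pderiv ^^ j) (linprod R)) x"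
      by (simp only: linprod_add higher_pderiv_lin_mult) (simp add: algebra_simps)
    have "cmod (poly ((pderiv ^^ Suc j) (linprod (add_mset r R))) x) \<le> t * P (Suc j) + of_nat (Suc j) * P j"
      unfolding eq P_def t_def
      by (rule order_trans[OF norm_triangle_ineq]) (simp only: norm_mult norm_of_nat order_refl)
    hence "cmod (poly ((pderiv ^^ Suc j) (linprod (add_mset r R))) x) * D ^ Suc j
        \<le> (t * P (Suc j) + of_nat (Suc j) * P j) * D ^ Suc j"
      using \<open>D > 0\<close> by (intro mult_right_mono) auto
    also have "\<dots> = t * (P (Suc j) * D ^ Suc j) + of_nat (Suc j) * (P j * D ^ j) * D"
      by (simp add: algebra_simps)
    also have "\<dots> \<le> t * (s ^ Suc j * P 0) + of_nat (Suc j) * (s ^ j * P 0) * t"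
    proof (rule add_mono)
      show "t * (P (Suc j) * D ^ Suc j) \<le> t * (s ^ Suc j * P 0)"
        using IH[of "Suc j"] unfolding P_def s_def t_def by (intro mult_left_mono) auto
      have "of_nat (Suc j) * (P j * D ^ j) \<le> of_nat (Suc j) * (s ^ j * P 0)"
        using IH[of j] unfolding P_def s_def by (intro mult_left_mono) auto
      then show "of_nat (Suc j) * (P j * D ^ j) * D \<le> of_nat (Suc j) * (s ^ j * P 0) * t"
        using t \<open>D > 0\<close> unfolding P_def s_def t_def by (intro mult_mono[OF _ t]) auto
    qed
    also have "\<dots> = t * P 0 * (s ^ Suc j + of_nat (Suc j) * s ^ j)"
      by (simp add: algebra_simps)
    also have "\<dots> \<le> t * P 0 * (s + 1) ^ Suc j"
      by (intro mult_left_mono pow_succ_ineq) (auto simp: s_def P_def t_def)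
    also have "\<dots> = real (size (add_mset r R)) ^ k * cmod (poly (linprod (add_mset r R)) x)"
      by (simp only: Suc s_def P0 t_def linprod_add poly_mult norm_mult size_add_mset mpoly) (simp add: algebra_simps)
    finally show ?thesis using Suc by simp
  qed
qed

lemma linprod_compare:
  fixes D :: real
  assumes "D > 0" "\<forall>r\<in>#R. D \<le> cmod (y - r)"
  shows "cmod (poly (linprod R) x) * D ^ size R \<le> cmod (poly (linprod R) y) * (D + cmod (x - y)) ^ size R"
  using assms(2)
proof (induction R)
  case empty
  then show ?case by (simp add: linprod_def)
next
  case (add r R)
  have IH: "cmod (poly (linprod R) x) * D ^ size R \<le> cmod (poly (linprod R) y) * (D + cmod (x - y)) ^ size R"
    using add by auto
  have t: "D \<le> cmod (y - r)" using add by auto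
  have a: "cmod (x - r) \<le> cmod (y - r) + cmod (x - y)"
    using norm_triangle_ineq[of "x - y" "y - r"] by simp
  have b: "(cmod (y - r) + cmod (x - y)) * D \<le> cmod (y - r) * (D + cmod (x - y))"
    using mult_left_mono[OF t, of "cmod (x-y)"] by (simp add: algebra_simps)
  have "cmod (poly (linprod (add_mset r R)) x) * D ^ size (add_mset r R)
      = (cmod (x - r) * D) * (cmod (poly (linprod R) x) * D ^ size R)"
    by (simp only: linprod_add poly_mult norm_mult size_add_mset power_Suc mpoly) (simp add: algebra_simps)
  also have "\<dots> \<le> (cmod (y - r) * (D + cmod (x - y))) * (cmod (poly (linprod R) y) * (D + cmod (x - y)) ^ size R)"
    using \<open>D > 0\<close>
    by (intro mult_mono[OF order_trans[OF mult_right_mono[OF a] b] IH]) auto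
  also have "\<dots> = cmod (poly (linprod (add_mset r R)) y) * (D + cmod (x - y)) ^ size (add_mset r R)"
    by (simp only: linprod_add poly_mult norm_mult size_add_mset power_Suc mpoly) (simp add: algebra_simps)
  finally show ?case .
qed

lemma poly_decomp_linprod:
  fixes p :: "complex poly"
  shows "p = smult (lead_coeff p) (linprod (proots p))"
  unfolding linprod_def using complex_poly_decompose_multiset[of p] by simp

lemma deriv_bound:
  fixes p :: "complex poly" and D :: real
  assumes "p \<noteq> 0" "D > 0" "\<And>r. poly p r = 0 \<Longrightarrow> D \<le> cmod (x - r)"
  shows "cmod (poly ((pderiv ^^ k) p) x) * D ^ k \<le> real (degree p) ^ k * cmod (poly p x)"
proof -
  let ?c = "lead_coeff p"
  have R: "\<forall>r\<in>#proots p. D \<le> cmod (x - r)" using assms by auto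
  have "cmod (poly ((pderiv ^^ k) p) x) * D ^ k = cmod ?c * (cmod (poly ((pderiv ^^ k) (linprod (proots p))) x) * D ^ k)"
    by (subst poly_decomp_linprod) (simp add: higher_pderiv_smult norm_mult)
  also have "\<dots> \<le> cmod ?c * (real (size (proots p)) ^ k * cmod (poly (linprod (proots p)) x))"
    by (intro mult_left_mono linprod_deriv_bound[OF assms(2) R]) auto
  also have "\<dots> = real (degree p) ^ k * cmod (poly p x)"
    by (subst (3) poly_decomp_linprod) (simp add: size_proots_complex norm_mult)
  finally show ?thesis .
qed

lemma compare_bound:
  fixes p :: "complex poly" and D :: real
  assumes "p \<noteq> 0" "D > 0" "\<And>r. poly p r = 0 \<Longrightarrow> D \<le> cmod (y - r)"
  shows "cmod (poly p x) * D ^ degree p \<le> cmod (poly p y) * (D + cmod (x - y)) ^ degree p"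
proof -
  let ?c = "lead_coeff p"
  have R: "\<forall>r\<in>#proots p. D \<le> cmod (y - r)" using assms by auto
  have "cmod (poly p x) * D ^ degree p = cmod ?c * (cmod (poly (linprod (proots p)) x) * D ^ size (proots p))"
    by (subst poly_decomp_linprod) (simp add: norm_mult size_proots_complex)
  also have "\<dots> \<le> cmod ?c * (cmod (poly (linprod (proots p)) y) * (D + cmod (x - y)) ^ size (proots p))"
    by (intro mult_left_mono linprod_compare[OF assms(2) R]) auto
  also have "\<dots> = cmod (poly p y) * (D + cmod (x - y)) ^ degree p"
    by (subst (3) poly_decomp_linprod) (simp add: size_proots_complex norm_mult)
  finally show ?thesis .
qed

lemma pow_diff_bound:
  fixes s s' :: complex
  assumes "cmod s \<le> \<rho>" "cmod s' \<le> \<rho>"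
  shows "cmod (s ^ n - s' ^ n) \<le> real n * \<rho> ^ (n - 1) * cmod (s - s')"
proof -
  have "cmod (s ^ n - s' ^ n) = cmod (s - s') * cmod (\<Sum>i<n. s' ^ (n - Suc i) * s ^ i)"
    by (simp add: power_diff_sumr2 norm_mult)
  also have "cmod (\<Sum>i<n. s' ^ (n - Suc i) * s ^ i) \<le> (\<Sum>i<n. \<rho> ^ (n - 1))"
  proof (rule order_trans[OF norm_sum sum_mono])
    fix i assume "i \<in> {..<n}"
    have "cmod (s' ^ (n - Suc i) * s ^ i) \<le> \<rho> ^ (n - Suc i) * \<rho> ^ i"
      unfolding norm_mult norm_power using assms order_trans[OF norm_ge_zero assms(1)]
      by (intro mult_mono power_mono zero_le_power) auto
    also have "\<dots> = \<rho> ^ (n - 1)"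
      using \<open>i \<in> {..<n}\<close> by (simp flip: power_add)
    finally show "cmod (s' ^ (n - Suc i) * s ^ i) \<le> \<rho> ^ (n - 1)" .
  qed
  hence "cmod (s - s') * cmod (\<Sum>i<n. s' ^ (n - Suc i) * s ^ i) \<le> cmod (s - s') * (real n * \<rho> ^ (n - 1))"
    by (intro mult_left_mono) auto
  finally show ?thesis by (simp add: algebra_simps)
qed

lemma local_inj:
  fixes p :: "complex poly" and \<rho> :: real
  assumes deg: "degree p \<le> N" and N: "N \<ge> 1"
    and hyp: "(\<Sum>k\<in>{1..<N}. cmod (poly ((pderiv ^^ Suc k) p) c) * \<rho> ^ k / fact k) < cmod (poly (pderiv p) c)"
  shows "\<And>s s'. cmod s \<le> \<rho> \<Longrightarrow> cmod s' \<le> \<rho> \<Longrightarrow> poly p (c + s) = poly p (c + s') \<Longrightarrow> s = s'"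
    and "\<And>s. cmod s \<le> \<rho> \<Longrightarrow> poly (pderiv p) (c + s) \<noteq> 0"
proof -
  define P where "P = (\<lambda>k. poly ((pderiv ^^ k) p) c)"
  define Sg where "Sg = (\<Sum>k\<in>{1..<N}. cmod (P (Suc k)) * \<rho> ^ k / fact k)"
  have hyp': "Sg < cmod (P 1)" using hyp by (simp add: P_def Sg_def)
  have split: "{..<N} = insert 0 {1..<N}" using N by auto
  have Ty: "poly p (c + s) = P 0 + (\<Sum>k<N. P (Suc k) / fact (Suc k) * s ^ Suc k)" for s
    unfolding poly_taylor[OF deg] sum.atMost_shift by (simp add: P_def)
  {
    fix s s' :: complex
    assume s: "cmod s \<le> \<rho>" and s': "cmod s' \<le> \<rho>" and eq: "poly p (c + s) = poly p (c + s')"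
    show "s = s'"
    proof (rule ccontr)
      assume ne: "s \<noteq> s'"
      define R where "R = (\<Sum>k\<in>{1..<N}. P (Suc k) / fact (Suc k) * (s ^ Suc k - s' ^ Suc k))"
      have "0 = poly p (c + s) - poly p (c + s')" using eq by simp
      also have "\<dots> = (\<Sum>k<N. P (Suc k) / fact (Suc k) * s ^ Suc k) - (\<Sum>k<N. P (Suc k) / fact (Suc k) * s' ^ Suc k)"
        unfolding Ty by simp
      also have "\<dots> = (\<Sum>k<N. P (Suc k) / fact (Suc k) * (s ^ Suc k - s' ^ Suc k))"
        by (simp only: sum_subtractf[symmetric] right_diff_distrib)
      also have "\<dots> = P 1 * (s - s') + R"
        unfolding split R_def by simp
      finally have 0: "P 1 * (s - s') = - R" by (simp add: algebra_simps)
      have "cmod R \<le> (\<Sum>k\<in>{1..<N}. cmod (P (Suc k) / fact (Suc k) * (s ^ Suc k - s' ^ Suc k)))"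
        unfolding R_def by (rule norm_sum)
      also have "\<dots> \<le> (\<Sum>k\<in>{1..<N}. cmod (P (Suc k)) * \<rho> ^ k / fact k * cmod (s - s'))"
      proof (rule sum_mono)
        fix k assume "k \<in> {1..<N}"
        have "cmod (P (Suc k) / fact (Suc k) * (s ^ Suc k - s' ^ Suc k))
            = cmod (P (Suc k)) / fact (Suc k) * cmod (s ^ Suc k - s' ^ Suc k)"
          by (simp only: norm_mult norm_divide norm_fact)
        also have "\<dots> \<le> cmod (P (Suc k)) / fact (Suc k) * (real (Suc k) * \<rho> ^ k * cmod (s - s'))"
          using pow_diff_bound[OF s s', of "Suc k"] by (intro mult_left_mono) auto
        also have "\<dots> = cmod (P (Suc k)) * \<rho> ^ k / fact k * cmod (s - s')"
          by (simp add: fact_Suc field_simps del: of_nat_Suc)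
        finally show "cmod (P (Suc k) / fact (Suc k) * (s ^ Suc k - s' ^ Suc k))
            \<le> cmod (P (Suc k)) * \<rho> ^ k / fact k * cmod (s - s')" .
      qed
      also have "\<dots> = Sg * cmod (s - s')"
        unfolding Sg_def by (simp add: sum_distrib_right)
      also have "\<dots> < cmod (P 1) * cmod (s - s')"
        using hyp' ne by (intro mult_strict_right_mono) auto
      finally have "cmod R < cmod (P 1 * (s - s'))" by (simp add: norm_mult)
      with 0 show False by simp
    qed
  }
  {
    fix s :: complex
    assume s: "cmod s \<le> \<rho>"
    have degp: "degree (pderiv p) \<le> N - 1" using deg by (simp add: degree_pderiv)
    have setq: "{..N - 1} = insert 0 {1..<N}" using N by auto
    have "poly (pderiv p) (c + s) = (\<Sum>k\<le>N - 1. poly ((pderiv ^^ k) (pderiv p)) c / fact k * s ^ k)"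
      by (rule poly_taylor[OF degp])
    also have "\<dots> = P 1 + (\<Sum>k\<in>{1..<N}. P (Suc k) / fact k * s ^ k)"
      unfolding setq by (simp add: P_def funpow_Suc_right del: funpow.simps)
    finally have eq: "poly (pderiv p) (c + s) = P 1 + (\<Sum>k\<in>{1..<N}. P (Suc k) / fact k * s ^ k)" .
    have "cmod (\<Sum>k\<in>{1..<N}. P (Suc k) / fact k * s ^ k) \<le> (\<Sum>k\<in>{1..<N}. cmod (P (Suc k)) * \<rho> ^ k / fact k)"
    proof (rule order_trans[OF norm_sum sum_mono])
      fix k assume "k \<in> {1..<N}"
      have "cmod (P (Suc k) / fact k * s ^ k) = cmod (P (Suc k)) * cmod s ^ k / fact k"
        by (simp add: norm_mult norm_divide norm_power)
      also have "\<dots> \<le> cmod (P (Suc k)) * \<rho> ^ k / fact k"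
        using s by (intro divide_right_mono mult_left_mono power_mono) auto
      finally show "cmod (P (Suc k) / fact k * s ^ k) \<le> cmod (P (Suc k)) * \<rho> ^ k / fact k" .
    qed
    hence "cmod (\<Sum>k\<in>{1..<N}. P (Suc k) / fact k * s ^ k) < cmod (P 1)"
      using hyp' unfolding Sg_def by linarith
    then show "poly (pderiv p) (c + s) \<noteq> 0"
      unfolding eq by (metis add.commute add_eq_0_iff norm_minus_cancel order_less_irrefl)
  }
qed

lemma poly_diff_op: "poly (diff_op n \<alpha> p) z = (\<Sum>k\<le>n. \<alpha> k * poly ((pderiv ^^ k) p) z)"
  by (simp add: diff_op_def poly_sum)

lemma diff_op_identity:
  assumes "degree p \<le> n" "\<alpha> 0 \<noteq> 0"
  shows "poly (diff_op n \<alpha> p) z = \<alpha> 0 * (poly p (z + \<alpha> 1 / \<alpha> 0)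
           + (\<Sum>k\<le>n. (\<alpha> k / \<alpha> 0 - (\<alpha> 1 / \<alpha> 0) ^ k / fact k) * poly ((pderiv ^^ k) p) z))"
proof -
  have "poly p (z + \<alpha> 1 / \<alpha> 0) + (\<Sum>k\<le>n. (\<alpha> k / \<alpha> 0 - (\<alpha> 1 / \<alpha> 0) ^ k / fact k) * poly ((pderiv ^^ k) p) z)
      = (\<Sum>k\<le>n. poly ((pderiv ^^ k) p) z / fact k * (\<alpha> 1 / \<alpha> 0) ^ k
           + (\<alpha> k / \<alpha> 0 - (\<alpha> 1 / \<alpha> 0) ^ k / fact k) * poly ((pderiv ^^ k) p) z)"
    by (simp add: poly_taylor[OF assms(1)] sum.distrib)
  also have "\<dots> = (\<Sum>k\<le>n. \<alpha> k / \<alpha> 0 * poly ((pderiv ^^ k) p) z)"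
    by (intro sum.cong refl) (simp add: algebra_simps)
  finally show ?thesis
    using assms(2) by (simp add: poly_diff_op sum_distrib_left)
qed

lemma higher_pderiv_diff_op:
  "(pderiv ^^ j) (diff_op n \<alpha> p) = diff_op n \<alpha> ((pderiv ^^ j) p)"
proof -
  have c: "(pderiv ^^ j) ((pderiv ^^ k) p) = (pderiv ^^ k) ((pderiv ^^ j) p)" for k
  proof -
    have "(pderiv ^^ j) ((pderiv ^^ k) p) = (pderiv ^^ (j + k)) p" by (simp add: funpow_add)
    also have "\<dots> = (pderiv ^^ (k + j)) p" by (simp add: add.commute)
    finally show ?thesis by (simp add: funpow_add)
  qed
  show ?thesis
    unfolding diff_op_def by (simp add: higher_pderiv_sum higher_pderiv_smult c)
qed

lemma degree_diff_op:
  assumes "\<alpha> 0 \<noteq> 0" "p \<noteq> 0"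
  shows "degree (diff_op n \<alpha> p) = degree p"
proof -
  have co: "coeff (diff_op n \<alpha> p) i = \<alpha> 0 * coeff p i" if "i \<ge> degree p" for i
  proof -
    have "coeff (diff_op n \<alpha> p) i = (\<Sum>k\<le>n. \<alpha> k * coeff ((pderiv ^^ k) p) i)"
      by (simp add: diff_op_def coeff_sum)
    also have "\<dots> = \<alpha> 0 * coeff p i"
      unfolding sum.atMost_shift using that
      by (simp add: coeff_higher_pderiv coeff_eq_0 del: funpow.simps)
    finally show ?thesis .
  qed
  have "degree (diff_op n \<alpha> p) \<le> degree p"
    by (rule degree_le) (use co in \<open>auto simp: coeff_eq_0\<close>)
  moreover have "coeff (diff_op n \<alpha> p) (degree p) \<noteq> 0"
    using co[of "degree p"] assms by simp
  hence "degree p \<le> degree (diff_op n \<alpha> p)" by (rule le_degree)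
  ultimately show ?thesis by simp
qed

lemma tau_le:
  fixes f :: "complex poly"
  assumes "rsquarefree f" "degree f \<ge> 2" "poly f a = 0" "poly (pderiv f) v = 0"
  shows "tau f \<le> cmod (a - v)"
proof -
  have f0: "f \<noteq> 0" using assms(1) by (simp add: rsquarefree_def)
  have d0: "pderiv f \<noteq> 0" using assms(2) by (auto simp: pderiv_eq_0_iff)
  have va: "v \<noteq> a" using assms(1,3,4) by (auto simp: rsquarefree_roots)
  let ?S = "{cmod (w - v) | w v. poly f w = 0 \<and> poly (pderiv f) v = 0 \<and> v \<noteq> w}"
  have "?S \<subseteq> (\<lambda>(w, v). cmod (w - v)) ` ({w. poly f w = 0} \<times> {v. poly (pderiv f) v = 0})"
    by auto
  moreover have "finite ({w. poly f w = 0} \<times> {v. poly (pderiv f) v = 0})"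
    using f0 d0 by (intro finite_cartesian_product poly_roots_finite)
  ultimately have "finite ?S" by (rule finite_subset[OF _ finite_imageI])
  moreover have "cmod (a - v) \<in> ?S" using assms va by blast
  ultimately show ?thesis unfolding tau_def by (rule Min_le)
qed

lemma dF_lt:
  fixes A B :: "complex multiset"
  assumes sz: "size B = size A" "size A \<ge> 1"
    and dB: "\<And>x. count B x \<le> 1"
    and near: "\<And>v. v \<in># B \<Longrightarrow> \<exists>u\<in>#A. cmod (u - v) < \<epsilon>"
    and uniq: "\<And>u v v'. u \<in># A \<Longrightarrow> v \<in># B \<Longrightarrow> v' \<in># B \<Longrightarrow> cmod (u - v) < \<epsilon> \<Longrightarrow> cmod (u - v') < \<epsilon> \<Longrightarrow> v = v'"
  shows "dF A B < \<epsilon>"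
proof -
  define u where "u = (SOME xs. mset xs = A)"
  define v where "v = (SOME ys. mset ys = B)"
  define m where "m = size A"
  have mu: "mset u = A" unfolding u_def by (rule someI_ex) (rule ex_mset)
  have mv: "mset v = B" unfolding v_def by (rule someI_ex) (rule ex_mset)
  have lu: "length u = m" using mu m_def by (metis size_mset)
  have lv: "length v = m" using mv sz m_def by (metis size_mset)
  have dv: "distinct v"
    unfolding distinct_count_atmost_1
  proof
    fix a
    show "count (mset v) a = (if a \<in> set v then 1 else 0)"
      using dB[of a] mv count_eq_zero_iff[of "mset v" a] by (auto simp flip: set_mset_mset)
  qed
  define \<phi> where "\<phi> = (\<lambda>j. SOME k. k < m \<and> cmod (u ! k - v ! j) < \<epsilon>)"
  have phi: "\<phi> j < m \<and> cmod (u ! \<phi> j - v ! j) < \<epsilon>" if "j < m" for j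
  proof -
    have "v ! j \<in># B" using that lv mv by (metis nth_mem set_mset_mset)
    then obtain x where x: "x \<in># A" "cmod (x - v ! j) < \<epsilon>" using near by blast
    then obtain k where "k < m" "u ! k = x" using mu lu by (metis in_set_conv_nth set_mset_mset)
    hence "\<exists>k. k < m \<and> cmod (u ! k - v ! j) < \<epsilon>" using x by blast
    thus ?thesis unfolding \<phi>_def by (rule someI_ex)
  qed
  have inj: "inj_on \<phi> {..<m}"
  proof (rule inj_onI)
    fix j j' assume j: "j \<in> {..<m}" and j': "j' \<in> {..<m}" and e: "\<phi> j = \<phi> j'"
    have "u ! \<phi> j \<in># A" using phi[of j] j lu mu by (metis lessThan_iff nth_mem set_mset_mset)
    moreover have "v ! j \<in># B" "v ! j' \<in># B" using j j' lv mv by (metis lessThan_iff nth_mem set_mset_mset)+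
    ultimately have "v ! j = v ! j'"
      using uniq phi[of j] phi[of j'] j j' e by auto
    thus "j = j'" using dv j j' lv by (simp add: nth_eq_iff_index_eq)
  qed
  have img: "\<phi> ` {..<m} = {..<m}"
    by (rule endo_inj_surj) (use phi inj in auto)
  have bphi: "bij_betw \<phi> {..<m} {..<m}" using inj img by (simp add: bij_betw_def)
  define \<sigma> where "\<sigma> = (\<lambda>k. if k < m then inv_into {..<m} \<phi> k else k)"
  have "bij_betw (inv_into {..<m} \<phi>) {..<m} {..<m}" by (rule bij_betw_inv_into[OF bphi])
  hence "bij_betw \<sigma> {..<m} {..<m}" by (rule iffD1[OF bij_betw_cong, rotated]) (simp add: \<sigma>_def)
  hence perm: "\<sigma> permutes {..<m}" by (rule bij_imp_permutes) (simp add: \<sigma>_def)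
  have good: "cmod (u ! k - v ! \<sigma> k) < \<epsilon>" if "k < m" for k
  proof -
    have s: "\<sigma> k = inv_into {..<m} \<phi> k" using that by (simp add: \<sigma>_def)
    have sk: "\<sigma> k < m" using that bphi s by (metis bij_betw_def img inv_into_into lessThan_iff)
    have "\<phi> (\<sigma> k) = k" using that img s by (simp add: f_inv_into_f)
    thus ?thesis using phi[OF sk] by simp
  qed
  have mpos: "m \<ge> 1" using sz m_def by simp
  have "Max ((\<lambda>k. cmod (u ! k - v ! (\<sigma> k))) ` {..<m}) < \<epsilon>"
    using good mpos by (subst Max_less_iff) (auto simp: lessThan_empty_iff)
  moreover have "Min ((\<lambda>\<sigma>. Max ((\<lambda>k. cmod (u ! k - v ! (\<sigma> k))) ` {..<m})) ` {\<sigma>. \<sigma> permutes {..<m}})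
      \<le> Max ((\<lambda>k. cmod (u ! k - v ! (\<sigma> k))) ` {..<m})"
    using perm by (intro Min_le finite_imageI finite_permutations) auto
  ultimately show ?thesis
    unfolding dF_def Let_def u_def[symmetric] v_def[symmetric] m_def[symmetric] by linarith
qed

lemma E_bound:
  fixes \<delta> g :: "nat \<Rightarrow> complex"
  assumes "\<delta> 0 = 0" "\<delta> 1 = 0" "M \<ge> 0" "\<And>k. 2 \<le> k \<Longrightarrow> k \<le> n \<Longrightarrow> cmod (g k) \<le> M"
  shows "cmod (\<Sum>k\<le>n. \<delta> k * g k) \<le> (\<Sum>k\<le>n. cmod (\<delta> k)) * M"
proof -
  have "cmod (\<Sum>k\<le>n. \<delta> k * g k) \<le> (\<Sum>k\<le>n. cmod (\<delta> k) * M)"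
  proof (rule order_trans[OF norm_sum sum_mono])
    fix k assume k: "k \<in> {..n}"
    show "cmod (\<delta> k * g k) \<le> cmod (\<delta> k) * M"
    proof (cases "k < 2")
      case True
      hence "k = 0 \<or> k = 1" by auto
      thus ?thesis using assms by auto
    next
      case False
      thus ?thesis using assms(4)[of k] k by (auto simp: norm_mult intro: mult_left_mono)
    qed
  qed
  thus ?thesis by (simp add: sum_distrib_right)
qed

lemma pow_ratio:
  fixes X Y D r :: real
  assumes "X * D ^ k \<le> r ^ k * Y" "D > 0" "0 \<le> r" "r \<le> D" "j \<le> k" "Y \<ge> 0"
  shows "X \<le> (r / D) ^ j * Y"
proof -
  have "X \<le> r ^ k * Y / D ^ k" using assms(1,2) by (simp add: pos_le_divide_eq)
  also have "\<dots> = (r / D) ^ k * Y" by (simp add: power_divide)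
  also have "\<dots> \<le> (r / D) ^ j * Y"
    using assms by (intro mult_right_mono power_decreasing) auto
  finally show ?thesis .
qed

lemma cmp_ratio:
  fixes X Y D B :: real
  assumes "X * D ^ d \<le> Y * (D + B) ^ d" "D > 0" "0 \<le> B" "B \<le> D" "d \<le> n" "Y \<ge> 0"
  shows "X \<le> 2 ^ n * Y"
proof -
  have "(D + B) ^ d \<le> (2 * D) ^ d" using assms by (intro power_mono) auto
  hence "X * D ^ d \<le> (2 ^ d * Y) * D ^ d"
  proof -
    have "Y * (D + B) ^ d \<le> Y * (2 * D) ^ d" using \<open>(D + B) ^ d \<le> (2 * D) ^ d\<close> assms(6)
      by (rule mult_left_mono)
    thus ?thesis using assms(1) by (simp add: power_mult_distrib algebra_simps)
  qed
  hence "X \<le> 2 ^ d * Y" using assms(2) by simp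
  also have "\<dots> \<le> 2 ^ n * Y" using assms by (intro mult_right_mono power_increasing) auto
  finally show ?thesis .
qed

lemma higher_pderiv_Suc_right: "(pderiv ^^ Suc j) p = (pderiv ^^ j) (pderiv p)"
  by (simp only: funpow_Suc_right o_def)

lemma part1:
  fixes f :: "complex poly" and \<alpha> :: "nat \<Rightarrow> complex" and \<epsilon> Dz L \<Delta> :: real and n :: nat
  assumes deg: "degree f \<le> n" "2 \<le> degree f" and rsq: "rsquarefree f" and a0: "\<alpha> 0 \<noteq> 0"
    and eps: "\<epsilon> > 0"
    and Dl: "\<Delta> = (\<Sum>k\<le>n. cmod (\<alpha> k / \<alpha> 0 - (\<alpha> 1 / \<alpha> 0) ^ k / fact k))"
    and Dz: "Dz \<ge> 1 + 2 * cmod (\<alpha> 1 / \<alpha> 0) + 2 * real n + 4 * real n ^ 2 * 2 ^ n * \<Delta>"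
    and L: "L = tau f - Dz - cmod (\<alpha> 1 / \<alpha> 0)" "L \<ge> real n" "L \<ge> cmod (\<alpha> 1 / \<alpha> 0)"
           "L * \<epsilon> > \<Delta> * real n ^ 2 * 2 ^ n"
    and z: "poly (diff_op n \<alpha> f) z = 0"
  shows "\<exists>a. poly f a = 0 \<and> cmod (z + \<alpha> 1 / \<alpha> 0 - a) < \<epsilon>"
proof (rule ccontr)
  assume H0: "\<not> ?thesis"
  define \<beta> where "\<beta> = \<alpha> 1 / \<alpha> 0"
  define \<delta> where "\<delta> = (\<lambda>k. \<alpha> k / \<alpha> 0 - \<beta> ^ k / fact k)"
  define B where "B = cmod \<beta>"
  define y where "y = z + \<beta>"
  define m where "m = degree f"
  have H: "\<And>a. poly f a = 0 \<Longrightarrow> \<epsilon> \<le> cmod (y - a)" using H0 by (auto simp: y_def \<beta>_def not_less)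
  have f0: "f \<noteq> 0" using rsq by (simp add: rsquarefree_def)
  have fd0: "pderiv f \<noteq> 0" using deg by (auto simp: pderiv_eq_0_iff)
  have degd: "degree (pderiv f) = m - 1" by (simp add: degree_pderiv m_def)
  have mn: "real m \<le> real n" using deg by (simp add: m_def)
  have B0: "B \<ge> 0" by (simp add: B_def)
  have d0: "\<delta> 0 = 0" using a0 by (simp add: \<delta>_def)
  have d1: "\<delta> 1 = 0" using a0 by (simp add: \<delta>_def \<beta>_def)
  have Dl': "\<Delta> = (\<Sum>k\<le>n. cmod (\<delta> k))" by (simp add: Dl \<delta>_def \<beta>_def)
  have Dge: "\<Delta> \<ge> 0" unfolding Dl' by (intro sum_nonneg) auto
  have iden: "0 = \<alpha> 0 * (poly f y + (\<Sum>k\<le>n. \<delta> k * poly ((pderiv ^^ k) f) z))"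
    using diff_op_identity[of f n \<alpha> z] deg(1) a0 z by (simp add: y_def \<delta>_def \<beta>_def)
  hence fy: "poly f y = - (\<Sum>k\<le>n. \<delta> k * poly ((pderiv ^^ k) f) z)"
    using a0 by (simp add: eq_neg_iff_add_eq_0)
  have fyne: "poly f y \<noteq> 0" using H[of y] eps by auto
  hence Fpos: "cmod (poly f y) > 0" by simp
  show False
  proof (cases "\<forall>a. poly f a = 0 \<longrightarrow> Dz \<le> cmod (y - a)")
    case True
    have KK: "0 \<le> 4 * real n ^ 2 * 2 ^ n * \<Delta>" using Dge by simp
    have Dz': "Dz \<ge> 1 + 2 * B + 2 * real n + 4 * real n ^ 2 * 2 ^ n * \<Delta>" using Dz by (simp add: B_def \<beta>_def)
    have Dzpos: "Dz > 0" using Dz' KK B0 by linarith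
    have rz: "Dz / 2 \<le> cmod (z - a)" if "poly f a = 0" for a
    proof -
      have "cmod (y - a) \<le> cmod (z - a) + B"
        using norm_triangle_ineq[of "z - a" \<beta>] by (simp add: y_def B_def algebra_simps)
      moreover have "Dz \<le> cmod (y - a)" using True that by auto
      ultimately show ?thesis using Dz' KK B0 by linarith
    qed
    have fz: "cmod (poly f z) \<le> 2 ^ n * cmod (poly f y)"
    proof (rule cmp_ratio)
      show "cmod (poly f z) * Dz ^ m \<le> cmod (poly f y) * (Dz + B) ^ m"
        using compare_bound[OF f0 Dzpos, of y z] True by (simp add: m_def y_def B_def)
      show "B \<le> Dz" using Dz' KK B0 by linarith
    qed (use Dzpos B0 deg in \<open>auto simp: m_def\<close>)
    define M where "M = (real m / (Dz / 2)) ^ 2 * (2 ^ n * cmod (poly f y))"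
    have kb: "cmod (poly ((pderiv ^^ k) f) z) \<le> M" if "2 \<le> k" "k \<le> n" for k
    proof -
      have "cmod (poly ((pderiv ^^ k) f) z) \<le> (real m / (Dz / 2)) ^ 2 * cmod (poly f z)"
      proof (rule pow_ratio)
        show "cmod (poly ((pderiv ^^ k) f) z) * (Dz / 2) ^ k \<le> real m ^ k * cmod (poly f z)"
          using deriv_bound[OF f0, of "Dz/2" z k] rz Dzpos by (simp add: m_def)
        show "real m \<le> Dz / 2" using mn Dz' KK B0 by linarith
      qed (use Dzpos that in auto)
      also have "\<dots> \<le> M" unfolding M_def by (intro mult_left_mono fz) auto
      finally show ?thesis .
    qed
    have Mnn: "M \<ge> 0" by (simp add: M_def)
    have "cmod (poly f y) \<le> \<Delta> * M"
      unfolding fy norm_minus_cancel Dl' by (rule E_bound[OF d0 d1 Mnn kb])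
    also have "\<dots> = (\<Delta> * (real m / (Dz / 2)) ^ 2 * 2 ^ n) * cmod (poly f y)"
      by (simp add: M_def algebra_simps)
    also have "\<dots> < 1 * cmod (poly f y)"
    proof (rule mult_strict_right_mono[OF _ Fpos])
      have "\<Delta> * (4 * real m ^ 2 * 2 ^ n) \<le> \<Delta> * (4 * real n ^ 2 * 2 ^ n)"
        using mn Dge by (intro mult_left_mono) (auto intro: power_mono)
      also have "\<dots> < Dz" using Dz' B0 by (simp add: algebra_simps)
      also have "\<dots> \<le> Dz ^ 2"
      proof -
        have "1 \<le> Dz" using Dz' KK B0 by linarith
        thus ?thesis using mult_left_mono[of 1 Dz Dz] by (simp add: power2_eq_square)
      qed
      finally have "\<Delta> * (4 * real m ^ 2 * 2 ^ n) < Dz ^ 2" .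
      thus "\<Delta> * (real m / (Dz / 2)) ^ 2 * 2 ^ n < 1"
        using Dzpos by (simp add: power_divide field_simps)
    qed
    finally show False by simp
  next
    case False
    then obtain a where a: "poly f a = 0" "cmod (y - a) < Dz" by (auto simp: not_le)
    have Lpos: "L > 0" using L deg by simp
    have L1: "L = tau f - Dz - B" using L(1) by (simp add: B_def \<beta>_def)
    have tv: "tau f \<le> cmod (a - v)" if "poly (pderiv f) v = 0" for v
      using tau_le[OF rsq deg(2) a(1) that] .
    have zv: "L \<le> cmod (z - v)" if "poly (pderiv f) v = 0" for v
    proof -
      have "cmod (a - v) \<le> cmod (a - y) + B + cmod (z - v)"
        using norm_triangle_ineq[of "a - y" "y - v"] norm_triangle_ineq[of \<beta> "z - v"]
        by (simp add: y_def B_def algebra_simps)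
      moreover have "cmod (a - y) = cmod (y - a)" by (rule norm_minus_commute)
      ultimately show ?thesis using tv[OF that] a(2) L1 by linarith
    qed
    have yv: "L \<le> cmod (y - v)" if "poly (pderiv f) v = 0" for v
    proof -
      have "cmod (a - v) \<le> cmod (a - y) + cmod (y - v)"
        using norm_triangle_ineq[of "a - y" "y - v"] by simp
      moreover have "cmod (a - y) = cmod (y - a)" by (rule norm_minus_commute)
      ultimately show ?thesis using tv[OF that] a(2) L1 B0 by linarith
    qed
    have f'z: "cmod (poly (pderiv f) z) \<le> 2 ^ n * cmod (poly (pderiv f) y)"
    proof (rule cmp_ratio)
      show "cmod (poly (pderiv f) z) * L ^ (m - 1) \<le> cmod (poly (pderiv f) y) * (L + B) ^ (m - 1)"
        using compare_bound[OF fd0 Lpos, of y z] yv degd by (simp add: y_def B_def)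
    qed (use Lpos B0 L deg in \<open>auto simp: m_def B_def \<beta>_def\<close>)
    define M where "M = (real (m - 1) / L) * (2 ^ n * cmod (poly (pderiv f) y))"
    have kb: "cmod (poly ((pderiv ^^ k) f) z) \<le> M" if k2: "2 \<le> k" and kn: "k \<le> n" for k
    proof -
      obtain j where kj: "k = Suc j" using k2 by (cases k) auto
      have "cmod (poly ((pderiv ^^ j) (pderiv f)) z) \<le> (real (m - 1) / L) ^ 1 * cmod (poly (pderiv f) z)"
      proof (rule pow_ratio)
        show "cmod (poly ((pderiv ^^ j) (pderiv f)) z) * L ^ j \<le> real (m - 1) ^ j * cmod (poly (pderiv f) z)"
          using deriv_bound[OF fd0 Lpos, of z j] zv degd by simp
        show "real (m - 1) \<le> L" using L(2) mn by linarith
      qed (use Lpos k2 kj in auto)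
      also have "\<dots> \<le> M" unfolding M_def power_one_right using Lpos by (intro mult_left_mono f'z) auto
      finally show ?thesis by (simp only: kj higher_pderiv_Suc_right)
    qed
    have Mnn: "M \<ge> 0" using Lpos by (simp add: M_def)
    have h1: "cmod (poly f y) \<le> \<Delta> * M"
      unfolding fy norm_minus_cancel Dl' by (rule E_bound[OF d0 d1 Mnn kb])
    have h2: "cmod (poly (pderiv f) y) * \<epsilon> \<le> real m * cmod (poly f y)"
      using deriv_bound[OF f0 eps, of y 1] H by (simp add: m_def norm_minus_commute)
    define F where "F = cmod (poly f y)"
    define G where "G = cmod (poly (pderiv f) y)"
    have "F * \<epsilon> * L \<le> (\<Delta> * M) * \<epsilon> * L"
      using h1 eps Lpos by (simp add: F_def)
    also have "\<dots> = \<Delta> * real (m - 1) * 2 ^ n * (G * \<epsilon>)"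
      using Lpos by (simp add: M_def G_def field_simps)
    also have "\<dots> \<le> \<Delta> * real (m - 1) * 2 ^ n * (real m * F)"
      using h2 Dge by (intro mult_left_mono) (auto simp: F_def G_def)
    also have "\<dots> \<le> \<Delta> * real n ^ 2 * 2 ^ n * F"
    proof -
      have "real (m - 1) * real m \<le> real n * real n"
        using mn by (intro mult_mono) auto
      hence "\<Delta> * (real (m - 1) * real m) * 2 ^ n * F \<le> \<Delta> * (real n * real n) * 2 ^ n * F"
        using Dge by (intro mult_right_mono mult_left_mono) (auto simp: F_def)
      thus ?thesis by (simp add: power2_eq_square algebra_simps)
    qed
    also have "\<dots> < L * \<epsilon> * F"
      using L(4) Fpos by (intro mult_strict_right_mono) (auto simp: F_def)
    finally show False by (simp add: algebra_simps)
  qed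
qed

lemma part2:
  fixes f :: "complex poly" and \<alpha> :: "nat \<Rightarrow> complex" and \<epsilon> Lt \<Delta> :: real and n :: nat
  assumes deg: "degree f \<le> n" "2 \<le> degree f" and rsq: "rsquarefree f" and a0: "\<alpha> 0 \<noteq> 0"
    and eps: "\<epsilon> > 0"
    and Dl: "\<Delta> = (\<Sum>k\<le>n. cmod (\<alpha> k / \<alpha> 0 - (\<alpha> 1 / \<alpha> 0) ^ k / fact k))"
    and L: "Lt = tau f - cmod (\<alpha> 1 / \<alpha> 0)" "Lt \<ge> real n" "Lt \<ge> cmod (\<alpha> 1 / \<alpha> 0)" "Lt \<ge> 1"
           "Lt \<ge> 4 * \<Delta> * real n ^ 2 * 2 ^ n" "Lt \<ge> 4 * real n ^ 2 * \<epsilon>"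
    and a: "poly f a = 0"
  shows "(\<Sum>k\<in>{1..<n}. cmod (poly ((pderiv ^^ Suc k) (diff_op n \<alpha> f)) (a - \<alpha> 1 / \<alpha> 0)) * \<epsilon> ^ k / fact k)
          < cmod (poly (pderiv (diff_op n \<alpha> f)) (a - \<alpha> 1 / \<alpha> 0))"
proof -
  define \<beta> where "\<beta> = \<alpha> 1 / \<alpha> 0"
  define \<delta> where "\<delta> = (\<lambda>k. \<alpha> k / \<alpha> 0 - \<beta> ^ k / fact k)"
  define B where "B = cmod \<beta>"
  define c where "c = a - \<beta>"
  define m where "m = degree f"
  define h where "h = diff_op n \<alpha> f"
  have f0: "f \<noteq> 0" using rsq by (simp add: rsquarefree_def)
  have fd0: "pderiv f \<noteq> 0" using deg by (auto simp: pderiv_eq_0_iff)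
  have degd: "degree (pderiv f) = m - 1" by (simp add: degree_pderiv m_def)
  have mn: "real m \<le> real n" using deg by (simp add: m_def)
  have B0: "B \<ge> 0" by (simp add: B_def)
  have d0: "\<delta> 0 = 0" using a0 by (simp add: \<delta>_def)
  have d1: "\<delta> 1 = 0" using a0 by (simp add: \<delta>_def \<beta>_def)
  have Dl': "\<Delta> = (\<Sum>k\<le>n. cmod (\<delta> k))" by (simp add: Dl \<delta>_def \<beta>_def)
  have Dge: "\<Delta> \<ge> 0" unfolding Dl' by (intro sum_nonneg) auto
  have Ltpos: "Lt > 0" using L by simp
  have L1: "Lt = tau f - B" using L(1) by (simp add: B_def \<beta>_def)
  define Fp where "Fp = cmod (poly (pderiv f) a)"
  have Fpos: "Fp > 0" using rsq a by (auto simp: Fp_def rsquarefree_roots)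
  define q where "q = real (m - 1) / Lt"
  have q0: "q \<ge> 0" using Ltpos by (simp add: q_def)
  have qn: "q \<le> real n / Lt" unfolding q_def using Ltpos mn by (intro divide_right_mono) auto
  have q1: "q \<le> 1"
  proof -
    have "real n / Lt \<le> 1" using Ltpos L(2) by (simp add: divide_le_eq)
    thus ?thesis using qn by linarith
  qed
  have hj: "poly ((pderiv ^^ j) h) c = \<alpha> 0 * (poly ((pderiv ^^ j) f) a
              + (\<Sum>k\<le>n. \<delta> k * poly ((pderiv ^^ k) ((pderiv ^^ j) f)) c))" for j
  proof -
    have "degree ((pderiv ^^ j) f) \<le> n" using deg by (simp add: degree_higher_pderiv)
    thus ?thesis
      unfolding h_def higher_pderiv_diff_op
      using diff_op_identity[of "(pderiv ^^ j) f" n \<alpha> c] a0 by (simp add: c_def \<delta>_def \<beta>_def)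
  qed
  have tv: "tau f \<le> cmod (a - v)" if "poly (pderiv f) v = 0" for v
    using tau_le[OF rsq deg(2) a that] .
  have av: "Lt \<le> cmod (a - v)" if "poly (pderiv f) v = 0" for v
    using tv[OF that] L1 B0 by linarith
  have cv: "Lt \<le> cmod (c - v)" if "poly (pderiv f) v = 0" for v
  proof -
    have "cmod (a - v) \<le> cmod (c - v) + B"
      using norm_triangle_ineq[of "c - v" \<beta>] by (simp add: c_def B_def algebra_simps)
    thus ?thesis using tv[OF that] L1 by linarith
  qed
  have f'c: "cmod (poly (pderiv f) c) \<le> 2 ^ n * Fp"
  proof (rule cmp_ratio)
    show "cmod (poly (pderiv f) c) * Lt ^ (m - 1) \<le> Fp * (Lt + B) ^ (m - 1)"
      using compare_bound[OF fd0 Ltpos, of a c] av degd by (simp add: c_def B_def Fp_def)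
  qed (use Ltpos B0 L deg in \<open>auto simp: m_def B_def \<beta>_def Fp_def\<close>)
  have Eb: "cmod (\<Sum>k\<le>n. \<delta> k * poly ((pderiv ^^ k) ((pderiv ^^ Suc i) f)) c) \<le> \<Delta> * (q ^ (i + 2) * (2 ^ n * Fp))" for i
    unfolding Dl'
  proof (rule E_bound[OF d0 d1])
    show "0 \<le> q ^ (i + 2) * (2 ^ n * Fp)" using q0 Fpos by simp
    fix k assume k2: "2 \<le> k" and kn: "k \<le> n"
    have eq: "(pderiv ^^ k) ((pderiv ^^ Suc i) f) = (pderiv ^^ (k + i)) (pderiv f)"
      by (simp only: funpow_add higher_pderiv_Suc_right o_def)
    have "cmod (poly ((pderiv ^^ (k + i)) (pderiv f)) c) \<le> (real (m - 1) / Lt) ^ (i + 2) * cmod (poly (pderiv f) c)"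
    proof (rule pow_ratio)
      show "cmod (poly ((pderiv ^^ (k + i)) (pderiv f)) c) * Lt ^ (k + i) \<le> real (m - 1) ^ (k + i) * cmod (poly (pderiv f) c)"
        using deriv_bound[OF fd0 Ltpos, of c "k + i"] cv degd by simp
      show "real (m - 1) \<le> Lt" using L(2) mn by linarith
    qed (use Ltpos k2 in auto)
    also have "\<dots> \<le> q ^ (i + 2) * (2 ^ n * Fp)"
      unfolding q_def[symmetric] using q0 by (intro mult_left_mono f'c) auto
    finally show "cmod (poly ((pderiv ^^ k) ((pderiv ^^ Suc i) f)) c) \<le> q ^ (i + 2) * (2 ^ n * Fp)"
      by (simp only: eq)
  qed
  have fa: "cmod (poly ((pderiv ^^ Suc i) f) a) \<le> q ^ i * Fp" for i
  proof -
    have "cmod (poly ((pderiv ^^ i) (pderiv f)) a) \<le> (real (m - 1) / Lt) ^ i * cmod (poly (pderiv f) a)"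
    proof (rule pow_ratio)
      show "cmod (poly ((pderiv ^^ i) (pderiv f)) a) * Lt ^ i \<le> real (m - 1) ^ i * cmod (poly (pderiv f) a)"
        using deriv_bound[OF fd0 Ltpos, of a i] av degd by simp
      show "real (m - 1) \<le> Lt" using L(2) mn by linarith
    qed (use Ltpos in auto)
    thus ?thesis by (simp only: higher_pderiv_Suc_right q_def Fp_def)
  qed
  have small: "\<Delta> * q ^ 2 * 2 ^ n \<le> 1 / 4"
  proof -
    have "q ^ 2 \<le> (real n / Lt) ^ 2" using power_mono[OF qn q0, of 2] .
    also have "\<dots> = real n ^ 2 / (Lt * Lt)" by (simp add: power2_eq_square)
    also have "\<dots> \<le> real n ^ 2 / Lt"
      using L(4) Ltpos by (intro divide_left_mono) (auto simp: mult_le_cancel_left1)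
    finally have "q ^ 2 \<le> real n ^ 2 / Lt" .
    hence "\<Delta> * q ^ 2 * 2 ^ n \<le> \<Delta> * (real n ^ 2 / Lt) * 2 ^ n"
      using Dge by (intro mult_right_mono mult_left_mono) auto
    also have "\<dots> = (4 * \<Delta> * real n ^ 2 * 2 ^ n) / Lt / 4" by (simp add: field_simps)
    also have "\<dots> \<le> 1 / 4" using L(5) Ltpos by (simp add: divide_le_eq)
    finally show ?thesis .
  qed
  have hup: "cmod (poly ((pderiv ^^ Suc i) h) c) \<le> cmod (\<alpha> 0) * (5 / 4 * q ^ i * Fp)" for i
  proof -
    have "cmod (poly ((pderiv ^^ Suc i) h) c) \<le> cmod (\<alpha> 0) * (q ^ i * Fp + \<Delta> * (q ^ (i + 2) * (2 ^ n * Fp)))"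
      unfolding hj norm_mult
      by (intro mult_left_mono order_trans[OF norm_triangle_ineq add_mono] fa Eb) auto
    also have "q ^ i * Fp + \<Delta> * (q ^ (i + 2) * (2 ^ n * Fp)) = q ^ i * Fp * (1 + \<Delta> * q ^ 2 * 2 ^ n)"
      by (simp add: algebra_simps power_add power2_eq_square)
    also have "q ^ i * Fp * (1 + \<Delta> * q ^ 2 * 2 ^ n) \<le> q ^ i * Fp * (5 / 4)"
      using small q0 Fpos by (intro mult_left_mono) auto
    hence "cmod (\<alpha> 0) * (q ^ i * Fp * (1 + \<Delta> * q ^ 2 * 2 ^ n)) \<le> cmod (\<alpha> 0) * (5 / 4 * q ^ i * Fp)"
      by (intro mult_left_mono) (auto simp: mult_ac)
    finally show ?thesis .
  qed
  have hlow: "cmod (\<alpha> 0) * (3 / 4 * Fp) \<le> cmod (poly (pderiv h) c)"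
  proof -
    have e: "poly (pderiv h) c = \<alpha> 0 * (poly (pderiv f) a + (\<Sum>k\<le>n. \<delta> k * poly ((pderiv ^^ k) ((pderiv ^^ Suc 0) f)) c))"
      using hj[of 1] by simp
    have "cmod (\<Sum>k\<le>n. \<delta> k * poly ((pderiv ^^ k) ((pderiv ^^ Suc 0) f)) c) \<le> \<Delta> * q ^ 2 * 2 ^ n * Fp"
      using Eb[of 0] by (simp add: algebra_simps power2_eq_square)
    also have "\<dots> \<le> 1 / 4 * Fp" using small Fpos by (intro mult_right_mono) auto
    finally have E0: "cmod (\<Sum>k\<le>n. \<delta> k * poly ((pderiv ^^ k) ((pderiv ^^ Suc 0) f)) c) \<le> 1 / 4 * Fp" .
    have "Fp - 1 / 4 * Fp \<le> cmod (poly (pderiv f) a + (\<Sum>k\<le>n. \<delta> k * poly ((pderiv ^^ k) ((pderiv ^^ Suc 0) f)) c))"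
      using E0 norm_triangle_ineq4[of "poly (pderiv f) a + (\<Sum>k\<le>n. \<delta> k * poly ((pderiv ^^ k) ((pderiv ^^ Suc 0) f)) c)" "(\<Sum>k\<le>n. \<delta> k * poly ((pderiv ^^ k) ((pderiv ^^ Suc 0) f)) c)"]
      unfolding Fp_def by simp
    hence "cmod (\<alpha> 0) * (3 / 4 * Fp) \<le> cmod (\<alpha> 0) * cmod (poly (pderiv f) a + (\<Sum>k\<le>n. \<delta> k * poly ((pderiv ^^ k) ((pderiv ^^ Suc 0) f)) c))"
      by (intro mult_left_mono) auto
    thus ?thesis unfolding e norm_mult .
  qed
  have qe: "q * \<epsilon> \<le> 1 / (4 * real n)"
  proof -
    have "q * \<epsilon> \<le> real n / Lt * \<epsilon>" using qn eps by (intro mult_right_mono) auto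
    also have "\<dots> \<le> 1 / (4 * real n)"
      using L(6) Ltpos deg eps by (simp add: field_simps power2_eq_square)
    finally show ?thesis .
  qed
  have n1: "real n \<ge> 2" using deg by simp
  have qe1: "q * \<epsilon> \<le> 1"
    using qe n1 by (smt (verit) divide_le_eq_1 of_nat_0_le_iff)
  have tm: "cmod (poly ((pderiv ^^ Suc k) h) c) * \<epsilon> ^ k / fact k \<le> cmod (\<alpha> 0) * (5 / 4 * (q * \<epsilon>) * Fp)"
    if k: "k \<in> {1..<n}" for k
  proof -
    have "cmod (poly ((pderiv ^^ Suc k) h) c) * \<epsilon> ^ k / fact k \<le> cmod (poly ((pderiv ^^ Suc k) h) c) * \<epsilon> ^ k"
      using divide_left_mono[of 1 "fact k" "cmod (poly ((pderiv ^^ Suc k) h) c) * \<epsilon> ^ k"] eps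
      by (simp add: fact_ge_1 del: funpow.simps)
    also have "\<dots> \<le> cmod (\<alpha> 0) * (5 / 4 * q ^ k * Fp) * \<epsilon> ^ k"
      using eps by (intro mult_right_mono hup) auto
    also have "\<dots> = cmod (\<alpha> 0) * (5 / 4 * (q * \<epsilon>) ^ k * Fp)" by (simp add: power_mult_distrib)
    also have "\<dots> \<le> cmod (\<alpha> 0) * (5 / 4 * (q * \<epsilon>) ^ 1 * Fp)"
      using k q0 eps qe1 Fpos by (intro mult_left_mono mult_right_mono power_decreasing) auto
    finally show ?thesis by simp
  qed
  have "(\<Sum>k\<in>{1..<n}. cmod (poly ((pderiv ^^ Suc k) h) c) * \<epsilon> ^ k / fact k)
        \<le> real (card {1..<n}) * (cmod (\<alpha> 0) * (5 / 4 * (q * \<epsilon>) * Fp))"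
    by (rule sum_bounded_above) (rule tm)
  also have "\<dots> \<le> real n * (cmod (\<alpha> 0) * (5 / 4 * (1 / (4 * real n)) * Fp))"
    using qe Fpos q0 eps by (intro mult_mono mult_left_mono mult_right_mono) auto
  also have "\<dots> = cmod (\<alpha> 0) * (5 / 16 * Fp)" using n1 by (simp add: field_simps)
  also have "\<dots> < cmod (\<alpha> 0) * (3 / 4 * Fp)" using a0 Fpos by (intro mult_strict_left_mono) auto
  also have "\<dots> \<le> cmod (poly (pderiv h) c)" by (rule hlow)
  finally show ?thesis by (simp add: h_def c_def \<beta>_def)
qed

lemma in_proots_iff: "p \<noteq> 0 \<Longrightarrow> x \<in># proots p \<longleftrightarrow> poly p x = 0"
  by (simp flip: set_mset_def[of "proots p"] add: set_count_proots)

theorem corollary4p4: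
  fixes n :: nat and \<alpha> :: "nat \<Rightarrow> complex" and \<epsilon> :: real
  assumes "n \<ge> 2" and "\<alpha> 0 \<noteq> 0" and "\<epsilon> > 0"
  shows "\<exists>C > 0. \<forall>f :: complex poly.
           degree f \<le> n \<and> degree f \<ge> 2 \<and> rsquarefree f \<and> tau f > C \<longrightarrow>
           dF (roots_mset (shift_poly (\<alpha> 1 / \<alpha> 0) f)) (roots_mset (diff_op n \<alpha> f)) < \<epsilon>"
proof -
  note n2 = assms(1) and a0 = assms(2) and eps = assms(3)
  define \<beta> where "\<beta> = \<alpha> 1 / \<alpha> 0"
  define B where "B = cmod \<beta>"
  define \<Delta> where "\<Delta> = (\<Sum>k\<le>n. cmod (\<alpha> k / \<alpha> 0 - (\<alpha> 1 / \<alpha> 0) ^ k / fact k))"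
  have Dge: "\<Delta> \<ge> 0" unfolding \<Delta>_def by (intro sum_nonneg) auto
  have B0: "B \<ge> 0" by (simp add: B_def)
  define D0 where "D0 = 1 + 2 * B + 2 * real n + 4 * real n ^ 2 * 2 ^ n * \<Delta>"
  define K where "K = 1 + B + real n + 4 * \<Delta> * real n ^ 2 * 2 ^ n + 4 * real n ^ 2 * \<epsilon> + \<Delta> * real n ^ 2 * 2 ^ n / \<epsilon>"
  have K1: "0 \<le> 4 * \<Delta> * real n ^ 2 * 2 ^ n" "0 \<le> 4 * real n ^ 2 * \<epsilon>" "0 \<le> \<Delta> * real n ^ 2 * 2 ^ n / \<epsilon>"
    "0 \<le> 4 * real n ^ 2 * 2 ^ n * \<Delta>"
    using Dge eps by auto
  have D0pos: "D0 > 0" unfolding D0_def using K1 B0 by linarith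
  have Kpos: "K > 0" unfolding K_def using K1 B0 by linarith
  define C where "C = D0 + B + K"
  have Cpos: "C > 0" unfolding C_def using D0pos Kpos B0 by linarith
  show ?thesis
  proof (intro exI[of _ C] conjI allI impI Cpos)
    fix f :: "complex poly"
    assume "degree f \<le> n \<and> degree f \<ge> 2 \<and> rsquarefree f \<and> tau f > C"
    hence deg: "degree f \<le> n" "2 \<le> degree f" and rsq: "rsquarefree f" and tauC: "tau f > C" by auto
    define L where "L = tau f - D0 - B"
    have LK: "L > K" using tauC unfolding L_def C_def by linarith
    have Ln: "L \<ge> real n" "L \<ge> B" using LK K1 B0 unfolding K_def by linarith+
    have Le: "L * \<epsilon> > \<Delta> * real n ^ 2 * 2 ^ n"
    proof -
      have "L > \<Delta> * real n ^ 2 * 2 ^ n / \<epsilon>" using LK K1 B0 unfolding K_def by linarith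
      thus ?thesis using eps by (simp add: pos_divide_less_eq)
    qed
    define L2 where "L2 = tau f - B"
    have L2L: "L2 \<ge> L" using D0pos unfolding L_def L2_def by linarith
    have L2c: "L2 \<ge> real n" "L2 \<ge> B" "L2 \<ge> 1" "L2 \<ge> 4 * \<Delta> * real n ^ 2 * 2 ^ n" "L2 \<ge> 4 * real n ^ 2 * \<epsilon>"
      using L2L LK K1 B0 unfolding K_def by linarith+
    define h where "h = diff_op n \<alpha> f"
    define g where "g = shift_poly \<beta> f"
    have f0: "f \<noteq> 0" using rsq by (simp add: rsquarefree_def)
    have degh: "degree h = degree f" unfolding h_def using degree_diff_op[of \<alpha> f n] a0 f0 by simp
    have h0: "h \<noteq> 0" using degh deg by auto
    have degg: "degree g = degree f" by (simp add: g_def shift_poly_def degree_pcompose)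
    have g0: "g \<noteq> 0" using degg deg by auto
    have polyg: "poly g x = poly f (\<beta> + x)" for x by (simp add: g_def shift_poly_def poly_pcompose)
    have P1: "\<exists>a. poly f a = 0 \<and> cmod (z + \<beta> - a) < \<epsilon>" if "poly h z = 0" for z
      using part1[where f=f and n=n and \<alpha>=\<alpha> and \<epsilon>=\<epsilon> and \<Delta>=\<Delta> and Dz=D0 and L=L and z=z] deg rsq a0 eps that Ln Le
      unfolding h_def \<beta>_def \<Delta>_def D0_def L_def B_def by simp
    have P2: "(\<Sum>k\<in>{1..<n}. cmod (poly ((pderiv ^^ Suc k) h) (a - \<beta>)) * \<epsilon> ^ k / fact k)
          < cmod (poly (pderiv h) (a - \<beta>))" if "poly f a = 0" for a
      using part2[where f=f and n=n and \<alpha>=\<alpha> and \<epsilon>=\<epsilon> and \<Delta>=\<Delta> and Lt=L2 and a=a] deg rsq a0 eps that L2c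
      unfolding h_def \<beta>_def \<Delta>_def L2_def B_def by simp
    have hdn: "degree h \<le> n" using degh deg by simp
    have n1: "n \<ge> 1" using n2 by simp
    note LI = local_inj[OF hdn n1 P2]
    have rsqh: "rsquarefree h"
      unfolding rsquarefree_roots
    proof (intro allI notI)
      fix z assume z: "poly h z = 0 \<and> poly (pderiv h) z = 0"
      then obtain a where a: "poly f a = 0" "cmod (z + \<beta> - a) < \<epsilon>" using P1 by blast
      have "poly (pderiv h) ((a - \<beta>) + (z + \<beta> - a)) \<noteq> 0"
        using LI(2)[OF a(1), of "z + \<beta> - a"] a(2) by simp
      thus False using z by simp
    qed
    show "dF (roots_mset (shift_poly (\<alpha> 1 / \<alpha> 0) f)) (roots_mset (diff_op n \<alpha> f)) < \<epsilon>"
      unfolding roots_mset_proots g_def[unfolded \<beta>_def, symmetric] h_def[symmetric]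
    proof (rule dF_lt)
      show "size (proots h) = size (proots g)" by (simp add: size_proots_complex degh degg)
      show "1 \<le> size (proots g)" using deg by (simp add: size_proots_complex degg)
      show "count (proots h) x \<le> 1" for x
      proof -
        have "order x h = 0 \<or> order x h = 1" using rsqh by (simp add: rsquarefree_def)
        thus ?thesis using h0 by auto
      qed
    next
      fix v assume "v \<in># proots h"
      hence "poly h v = 0" using in_proots_iff[OF h0] by simp
      then obtain a where a: "poly f a = 0" "cmod (v + \<beta> - a) < \<epsilon>" using P1 by blast
      have "a - \<beta> \<in># proots g" using in_proots_iff[OF g0] polyg a(1) by simp
      moreover have "cmod ((a - \<beta>) - v) < \<epsilon>" using a(2) by (simp add: norm_minus_commute algebra_simps)
      ultimately show "\<exists>u\<in>#proots g. cmod (u - v) < \<epsilon>" by blast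
    next
      fix u v v'
      assume u: "u \<in># proots g" and v: "v \<in># proots h" and v': "v' \<in># proots h"
        and uv: "cmod (u - v) < \<epsilon>" and uv': "cmod (u - v') < \<epsilon>"
      have fa: "poly f (\<beta> + u) = 0" using u in_proots_iff[OF g0] polyg by simp
      have hv: "poly h v = 0" "poly h v' = 0" using v v' in_proots_iff[OF h0] by auto
      have "v - u = v' - u"
      proof (rule LI(1)[OF fa])
        show "cmod (v - u) \<le> \<epsilon>" using uv by (simp add: norm_minus_commute)
        show "cmod (v' - u) \<le> \<epsilon>" using uv' by (simp add: norm_minus_commute)
        show "poly h (\<beta> + u - \<beta> + (v - u)) = poly h (\<beta> + u - \<beta> + (v' - u))" using hv by simp
      qed
      thus "v = v'" by simp
    qed
  qed
qed

end
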